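(* There exists a sequence $S\in\{0,1\}^\omega$ which is FS-deep but not LZ-deep.
   Context: $S\upharpoonright n$ is the length-$n$ prefix of $S$. A finite-state transducer (FST) is $T=(Q,q_0,\delta,\nu)$ with finite state set $Q$, start state $q_0$, $\delta:Q\times\{0,1\}\to Q$, $\nu:Q\times\{0,1\}\to\{0,1\}^*$; $T(\lambda)=\lambda$, $T(xb)=T(x)\nu(\hat\delta(x),b)$; $T$ is an ILFST if $x\mapsto(T(x),\hat\delta(x))$ is injective. FSTs are described by the following fixed binary representation. For $n\ge1$, $\mathrm{bin}(n)$ is the binary representation of $n$ and $\mathrm{string}(n)$ is $\mathrm{bin}(n)$ without its leading 1. For $x=x_1\cdots x_l$, $x^\dagger=x_10x_20\cdots x_{l-1}0x_l1$, $x^\diamond=\overline{(1x)^\dagger}$ (bitwise complement), $d(x)=x_1x_1\cdots x_lx_l$. For an FST with states $q_1,\dots,q_m$, write for $t=2i-1+b$: $(\delta(q_i,b),\nu(q_i,b))=(q_{1+(n_t\bmod m)},\mathrm{string}(n'_t))$; the table is encoded as $\pi=\mathrm{bin}(n_1)^\ddagger\mathrm{string}(n'_1)^\diamond\cdots\mathrm{bin}(n_{2m})^\ddagger\mathrm{string}(n'_{2m})^\diamond$, where $\mathrm{bin}(n_t)^\ddagger$ is empty for a self-loop and $\mathrm{bin}(n_t)^\dagger$ otherwise; $d(\mathrm{bin}(i))01\pi$ describes that FST with start state $q_i$. $|T|$ is the shortest description length, $\mathrm{FST}^{\le k}=\{T:|T|\le k\}$, and $D^k(x)=\min\{|y|:T\in\mathrm{FST}^{\le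 k},T(y)=x\}$. $S$ is FS-deep (infinitely often finite-state deep) if there is $\alpha>0$ such that for every $k$ there is $k'$ with $D^k(S\upharpoonright n)-D^{k'}(S\upharpoonright n)\ge\alpha n$ for infinitely many $n$. LZ denotes the Lempel–Ziv 78 compressor: it parses $x=x_1\cdots x_n$ into phrases, each distinct from all earlier ones (except possibly the last), with $x_i=x_{l(i)}b_i$, $l(i)<i$, $b_i\in\{0,1\}$, $x_0=\lambda$; it outputs $c_{l(1)}b_1\cdots c_{l(n)}b_n$ with $c_j$ a prefix-free encoding of index $j$. $S$ is LZ-deep if there is $\alpha>0$ such that for every ILFST $C$, $|C(S\upharpoonright n)|-|\mathrm{LZ}(S\upharpoonright n)|\ge\alpha n$ for all but finitely many $n$. *)

theory Defs
  imports Main "HOL-Library.Extended_Nat"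
begin

text \<open>Binary strings are bool lists (False = 0, True = 1); sequences are nat => bool.\<close>

definition prefix_of :: "(nat \<Rightarrow> bool) \<Rightarrow> nat \<Rightarrow> bool list" where
  "prefix_of S n = map S [0..<n]"

text \<open>bin n: binary representation of n (meaningful for n >= 1).\<close>
fun bin :: "nat \<Rightarrow> bool list" where
  "bin n = (if n \<le> 1 then [n = 1] else bin (n div 2) @ [odd n])"

definition bstring :: "nat \<Rightarrow> bool list" where
  "bstring n = tl (bin n)"

fun dag :: "bool list \<Rightarrow> bool list" where
  "dag [] = []"
| "dag [a] = [a, True]"
| "dag (a # xs) = a # False # dag xs"

definition diam :: "bool list \<Rightarrow> bool list" where
  "diam x = map Not (dag (True # x))"

definition dbl :: "bool list \<Rightarrow> bool list" where
  "dbl x = concat (map (\<lambda>b. [b, b]) x)"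

text \<open>States are 0..<fst_m T; state j corresponds to q_(j+1) of the paper.\<close>
record fst =
  fst_m :: nat
  fst_q0 :: nat
  fst_delta :: "nat \<Rightarrow> bool \<Rightarrow> nat"
  fst_nu :: "nat \<Rightarrow> bool \<Rightarrow> bool list"

definition fst_wf :: "fst \<Rightarrow> bool" where
  "fst_wf T \<longleftrightarrow> 1 \<le> fst_m T \<and> fst_q0 T < fst_m T \<and>
     (\<forall>q<fst_m T. \<forall>b. fst_delta T q b < fst_m T)"

fun run_out :: "fst \<Rightarrow> nat \<Rightarrow> bool list \<Rightarrow> bool list" where
  "run_out T q [] = []"
| "run_out T q (b # y) = fst_nu T q b @ run_out T (fst_delta T q b) y"

fun run_state :: "fst \<Rightarrow> nat \<Rightarrow> bool list \<Rightarrow> nat" where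
  "run_state T q [] = q"
| "run_state T q (b # y) = run_state T (fst_delta T q b) y"

definition fst_out :: "fst \<Rightarrow> bool list \<Rightarrow> bool list" where
  "fst_out T x = run_out T (fst_q0 T) x"

definition fst_state :: "fst \<Rightarrow> bool list \<Rightarrow> nat" where
  "fst_state T x = run_state T (fst_q0 T) x"

definition ILFST :: "fst \<Rightarrow> bool" where
  "ILFST T \<longleftrightarrow> fst_wf T \<and> inj (\<lambda>x. (fst_out T x, fst_state T x))"

text \<open>Encoding of table entry t = 2i-1+b (state j = i-1, bit b), given the chosen n_t.\<close>
definition entry_code :: "fst \<Rightarrow> (nat \<Rightarrow> bool \<Rightarrow> nat) \<Rightarrow> nat \<Rightarrow> bool \<Rightarrow> bool list" where
  "entry_code T ns j b =
     (if fst_delta T j b = j then [] else dag (bin (ns j b))) @ diam (fst_nu T j b)"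

text \<open>The output nu(q_i,b) = string(n'_t) determines n'_t uniquely.\<close>
definition fst_describes :: "bool list \<Rightarrow> fst \<Rightarrow> bool" where
  "fst_describes d T \<longleftrightarrow> fst_wf T \<and>
     (\<exists>ns. (\<forall>j<fst_m T. \<forall>b. 1 \<le> ns j b \<and> ns j b mod fst_m T = fst_delta T j b) \<and>
        d = dbl (bin (fst_q0 T + 1)) @ [False, True] @
            concat (map (\<lambda>j. entry_code T ns j False @ entry_code T ns j True) [0..<fst_m T]))"

definition fst_size :: "fst \<Rightarrow> nat" where
  "fst_size T = (LEAST l. \<exists>d. fst_describes d T \<and> length d = l)"

definition FST_le :: "nat \<Rightarrow> fst set" where
  "FST_le k = {T. fst_wf T \<and> fst_size T \<le> k}"

text \<open>D^k(x); infinity if no FST of size <= k outputs x.\<close>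
definition Dk :: "nat \<Rightarrow> bool list \<Rightarrow> enat" where
  "Dk k x = Inf {enat (length y) | y T. T \<in> FST_le k \<and> fst_out T y = x}"

definition FS_deep :: "(nat \<Rightarrow> bool) \<Rightarrow> bool" where
  "FS_deep S \<longleftrightarrow> (\<exists>\<alpha>::real. \<alpha> > 0 \<and> (\<forall>k. \<exists>k'. \<exists>\<^sub>\<infinity>n.
      \<exists>b. Dk k' (prefix_of S n) = enat b \<and>
          (\<forall>a. Dk k (prefix_of S n) = enat a \<longrightarrow> real a - real b \<ge> \<alpha> * real n)))"

text \<open>Prefix-free code for a pointer j >= 0: d(bin(|bin(j+1)|)) 01 string(j+1).\<close>
definition lz_code :: "nat \<Rightarrow> bool list" where
  "lz_code j = dbl (bin (length (bin (j + 1)))) @ [False, True] @ bstring (j + 1)"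

definition lz_next :: "bool list list \<Rightarrow> bool list \<Rightarrow> bool list" where
  "lz_next ds r =
     (if \<exists>k. 1 \<le> k \<and> k \<le> length r \<and> take k r \<notin> set ds
      then take (LEAST k. 1 \<le> k \<and> k \<le> length r \<and> take k r \<notin> set ds) r
      else r)"

fun lz_parse_aux :: "nat \<Rightarrow> bool list list \<Rightarrow> bool list \<Rightarrow> bool list list" where
  "lz_parse_aux 0 ds r = []"
| "lz_parse_aux (Suc f) ds r =
     (if r = [] then [] else
        (let p = lz_next ds r in p # lz_parse_aux f (ds @ [p]) (drop (length p) r)))"

definition lz_parse :: "bool list \<Rightarrow> bool list list" where
  "lz_parse x = lz_parse_aux (length x) [] x"

text \<open>Phrase i (1-based) is x_(l(i)) b_i with x_0 = empty word.\<close>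
definition lz_pointer :: "bool list list \<Rightarrow> nat \<Rightarrow> nat" where
  "lz_pointer ps i = (LEAST j. j < Suc i \<and> ([] # ps) ! j = butlast (ps ! i))"

definition LZ :: "bool list \<Rightarrow> bool list" where
  "LZ x = (let ps = lz_parse x in
     concat (map (\<lambda>i. lz_code (lz_pointer ps i) @ [last (ps ! i)]) [0..<length ps]))"

definition LZ_deep :: "(nat \<Rightarrow> bool) \<Rightarrow> bool" where
  "LZ_deep S \<longleftrightarrow> (\<exists>\<alpha>::real. \<alpha> > 0 \<and> (\<forall>C. ILFST C \<longrightarrow>
     (\<forall>\<^sub>F n in sequentially.
        real (length (fst_out C (prefix_of S n))) - real (length (LZ (prefix_of S n))) \<ge> \<alpha> * real n)))"

end

theory Submission
  imports Defs "HOL-Library.Nat_Bijection" "HOL-Library.Infinite_Set"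
begin

lemma run_out_append: "run_out T q (u @ v) = run_out T q u @ run_out T (run_state T q u) v"
  by (induction u arbitrary: q) auto

lemma run_state_append: "run_state T q (u @ v) = run_state T (run_state T q u) v"
  by (induction u arbitrary: q) auto

lemma run_state_lt: "fst_wf T \<Longrightarrow> q < fst_m T \<Longrightarrow> run_state T q y < fst_m T"
  by (induction y arbitrary: q) (auto simp: fst_wf_def)

lemma length_dag: "length (dag x) = 2 * length x"
  by (induction x rule: dag.induct) auto

lemma length_diam: "length (diam x) = 2 * length x + 2"
  by (simp add: diam_def length_dag)

lemma skip:
  assumes wf: "fst_wf T" and bd: "\<forall>q<fst_m T. \<forall>b. length (fst_nu T q b) \<le> B"
  shows "q < fst_m T \<Longrightarrow> length u0 \<le> lp \<Longrightarrow> lp \<le> length (u0 @ run_out T q y) \<Longrightarrow>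
    \<exists>t u w. length w = lp \<and> length u \<le> B \<and> u0 @ run_out T q (take t y) = w @ u \<and>
       u0 @ run_out T q y = w @ u @ run_out T (run_state T q (take t y)) (drop t y)"
proof (induction y arbitrary: q u0)
  case Nil
  then show ?case by (intro exI[of _ 0] exI[of _ "[]"] exI[of _ u0]) auto
next
  case (Cons b y)
  show ?case
  proof (cases "length u0 = lp")
    case True
    then show ?thesis by (intro exI[of _ 0] exI[of _ "[]"] exI[of _ u0]) auto
  next
    case False
    define u1 where "u1 = u0 @ fst_nu T q b"
    have q1: "fst_delta T q b < fst_m T" using wf Cons.prems(1) by (auto simp: fst_wf_def)
    show ?thesis
    proof (cases "length u1 \<le> lp")
      case True
      have "lp \<le> length (u1 @ run_out T (fst_delta T q b) y)" using Cons.prems(3) by (simp add: u1_def)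
      from Cons.IH[OF q1 True this] obtain t u w where
        h: "length w = lp" "length u \<le> B" "u1 @ run_out T (fst_delta T q b) (take t y) = w @ u"
        "u1 @ run_out T (fst_delta T q b) y = w @ u @ run_out T (run_state T (fst_delta T q b) (take t y)) (drop t y)"
        by blast
      show ?thesis using h by (intro exI[of _ "Suc t"] exI[of _ u] exI[of _ w]) (auto simp: u1_def)
    next
      case False
      have "length (fst_nu T q b) \<le> B" using bd Cons.prems(1) by auto
      then have lu: "length (drop lp u1) \<le> B" using False \<open>length u0 \<noteq> lp\<close> Cons.prems(2)
        by (simp add: u1_def)
      have e1: "u0 @ run_out T q (take (Suc 0) (b # y)) = take lp u1 @ drop lp u1"
        unfolding append_take_drop_id by (simp add: u1_def)
      have e2: "u0 @ run_out T q (b # y) = take lp u1 @ drop lp u1 @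
          run_out T (run_state T q (take (Suc 0) (b # y))) (drop (Suc 0) (b # y))"
        unfolding append_assoc[symmetric] append_take_drop_id by (simp add: u1_def)
      have e3: "length (take lp u1) = lp" using False by simp
      show ?thesis using lu e1 e2 e3 by blast
    qed
  qed
qed

lemma mainlb:
  assumes wf: "fst_wf T" and bd: "\<forall>q<fst_m T. \<forall>b. length (fst_nu T q b) \<le> B"
    and pB: "B < length z"
    and notG: "\<forall>q<fst_m T. \<forall>u0 s. length u0 \<le> B \<longrightarrow> length s \<le> L \<longrightarrow>
         take (length z) (u0 @ run_out T q s) \<noteq> z"
  shows "q < fst_m T \<Longrightarrow> length u0 \<le> B \<Longrightarrow>
     u0 @ run_out T q y = concat (replicate r z) @ v \<Longrightarrow> r * (L + 1) \<le> length y"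
proof (induction r arbitrary: q u0 y v)
  case 0
  then show ?case by simp
next
  case (Suc r)
  have l1: "length u0 \<le> length z" using Suc.prems(2) pB by simp
  have l2: "length z \<le> length (u0 @ run_out T q y)"
    unfolding Suc.prems(3) by simp
  from skip[OF wf bd Suc.prems(1) l1 l2] obtain t u w where
    h: "length w = length z" "length u \<le> B" "u0 @ run_out T q (take t y) = w @ u"
       "u0 @ run_out T q y = w @ u @ run_out T (run_state T q (take t y)) (drop t y)" by blast
  have "w @ (u @ run_out T (run_state T q (take t y)) (drop t y)) = z @ (concat (replicate r z) @ v)"
    using h(4) Suc.prems(3) by simp
  then have wz: "w = z" and rest: "u @ run_out T (run_state T q (take t y)) (drop t y) = concat (replicate r z) @ v"
    using h(1) by (auto simp: append_eq_append_conv)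
  have "take (length z) (u0 @ run_out T q (take t y)) = z" using h(3) wz by simp
  then have "\<not> length (take t y) \<le> L" using notG Suc.prems(1,2) by blast
  then have lt: "L + 1 \<le> length (take t y)" by (simp only: not_le Suc_eq_plus1[symmetric] Suc_le_eq)
  have qs: "run_state T q (take t y) < fst_m T" using run_state_lt[OF wf Suc.prems(1)] .
  have "r * (L + 1) \<le> length (drop t y)" using Suc.IH[OF qs h(2) rest] .
  moreover have "length y = length (take t y) + length (drop t y)" by simp
  moreover have "Suc r * (L + 1) = (L + 1) + r * (L + 1)" by simp
  ultimately show ?case using lt by linarith
qed

lemma desc_exists:
  assumes wf: "fst_wf T" shows "\<exists>d. fst_describes d T"
proof -
  define ns where "ns = (\<lambda>j b. fst_delta T j b + fst_m T)"
  have "\<forall>j<fst_m T. \<forall>b. 1 \<le> ns j b \<and> ns j b mod fst_m T = fst_delta T j b"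
    using wf by (auto simp: ns_def fst_wf_def)
  then show ?thesis unfolding fst_describes_def using wf by blast
qed

lemma size_bounds:
  assumes "T \<in> FST_le k"
  shows "fst_wf T" "fst_m T \<le> k" "\<forall>q<fst_m T. \<forall>b. length (fst_nu T q b) \<le> k"
proof -
  show wf: "fst_wf T" using assms by (simp add: FST_le_def)
  have sz: "fst_size T \<le> k" using assms by (simp add: FST_le_def)
  have "\<exists>l d. fst_describes d T \<and> length d = l" using desc_exists[OF wf] by blast
  then have "\<exists>d. fst_describes d T \<and> length d = fst_size T"
    unfolding fst_size_def by (rule LeastI_ex)
  then obtain d where d: "fst_describes d T" "length d \<le> k" using sz by auto
  then obtain ns where dd: "d = dbl (bin (fst_q0 T + 1)) @ [False, True] @
            concat (map (\<lambda>j. entry_code T ns j False @ entry_code T ns j True) [0..<fst_m T])"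
    unfolding fst_describes_def by blast
  define g where "g = (\<lambda>j. entry_code T ns j False @ entry_code T ns j True)"
  have ld: "sum_list (map (length \<circ> g) [0..<fst_m T]) \<le> k"
    using d(2) unfolding dd g_def[symmetric] by (simp add: length_concat)
  have ge: "\<And>j b. 2 * length (fst_nu T j b) + 2 \<le> length (entry_code T ns j b)"
    by (simp add: entry_code_def length_diam)
  have g1: "\<And>j. 1 \<le> (length \<circ> g) j" using ge by (simp add: g_def) (metis add_leE le_add2 ge trans_le_add1 Suc_le_eq less_le_trans zero_less_Suc)
  have "sum_list (map (\<lambda>_. 1::nat) [0..<fst_m T]) \<le> sum_list (map (length \<circ> g) [0..<fst_m T])"
    by (rule sum_list_mono) (use g1 in auto)
  then show "fst_m T \<le> k" using ld by (simp add: sum_list_triv)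
  show "\<forall>q<fst_m T. \<forall>b. length (fst_nu T q b) \<le> k"
  proof (intro allI impI)
    fix q b assume q: "q < fst_m T"
    have "(length \<circ> g) q \<le> sum_list (map (length \<circ> g) [0..<fst_m T])"
      by (rule member_le_sum_list) (use q in auto)
    moreover have "length (fst_nu T q b) \<le> (length \<circ> g) q"
      using ge[of q b] by (cases b) (auto simp: g_def)
    ultimately show "length (fst_nu T q b) \<le> k" using ld by linarith
  qed
qed

fun trun :: "(nat \<times> bool list) list \<Rightarrow> nat \<Rightarrow> bool list \<Rightarrow> bool list" where
  "trun tb q [] = []"
| "trun tb q (b # s) = snd (tb ! (2 * q + (if b then 1 else 0))) @
     trun tb (fst (tb ! (2 * q + (if b then 1 else 0)))) s"

definition table :: "fst \<Rightarrow> (nat \<times> bool list) list" where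
  "table T = map (\<lambda>i. (fst_delta T (i div 2) (odd i), fst_nu T (i div 2) (odd i))) [0..<2 * fst_m T]"

lemma table_nth: "q < fst_m T \<Longrightarrow> table T ! (2 * q + (if b then 1 else 0)) = (fst_delta T q b, fst_nu T q b)"
  by (cases b) (auto simp: table_def)

lemma run_out_trun: "fst_wf T \<Longrightarrow> q < fst_m T \<Longrightarrow> run_out T q s = trun (table T) q s"
proof (induction s arbitrary: q)
  case Nil then show ?case by simp
next
  case (Cons b s)
  have "fst_delta T q b < fst_m T" using Cons.prems by (auto simp: fst_wf_def)
  then show ?case using Cons by (simp add: table_nth)
qed

definition Xk :: "nat \<Rightarrow> (nat \<times> bool list) set" where
  "Xk k = {..<k} \<times> {w. length w \<le> k}"

definition Tabk :: "nat \<Rightarrow> (nat \<times> bool list) list set" where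
  "Tabk k = {tb. set tb \<subseteq> Xk k \<and> length tb \<le> 2 * k}"

definition A0 :: "nat \<Rightarrow> ((nat \<times> bool list) list \<times> nat \<times> bool list) set" where
  "A0 k = Tabk k \<times> {..<k} \<times> {u0. length u0 \<le> k}"

definition Gk :: "nat \<Rightarrow> nat \<Rightarrow> bool list set" where
  "Gk k L = (\<lambda>((tb, q, u0), s). take (2 * L) (u0 @ trun tb q s)) ` (A0 k \<times> {s. length s \<le> L})"

lemma finite_len_le: "finite {w::bool list. length w \<le> k}"
  using finite_lists_length_le[of "UNIV::bool set" k] by simp

lemma finite_A0: "finite (A0 k)"
proof -
  have "finite (Xk k)" unfolding Xk_def using finite_len_le by simp
  then have "finite (Tabk k)" unfolding Tabk_def by (rule finite_lists_length_le)
  then show ?thesis unfolding A0_def using finite_len_le by simp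
qed

lemma table_in: assumes "T \<in> FST_le k" shows "table T \<in> Tabk k"
proof -
  note sb = size_bounds[OF assms]
  have "set (table T) \<subseteq> Xk k"
  proof
    fix x assume "x \<in> set (table T)"
    then obtain i where i: "i < 2 * fst_m T" "x = (fst_delta T (i div 2) (odd i), fst_nu T (i div 2) (odd i))"
      by (auto simp: table_def)
    have j: "i div 2 < fst_m T" using i(1) by simp
    have a: "fst_delta T (i div 2) (odd i) < k" using sb(1,2) j unfolding fst_wf_def
      by (meson order_less_le_trans)
    have b: "length (fst_nu T (i div 2) (odd i)) \<le> k" using sb(3) j by blast
    show "x \<in> Xk k" using a b i(2) unfolding Xk_def by simp
  qed
  moreover have "length (table T) \<le> 2 * k" using sb(2) by (simp add: table_def)
  ultimately show ?thesis by (simp add: Tabk_def)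
qed

lemma in_Gk:
  assumes "T \<in> FST_le k" "q < fst_m T" "length u0 \<le> k" "length s \<le> L"
  shows "take (2 * L) (u0 @ run_out T q s) \<in> Gk k L"
proof -
  note sb = size_bounds[OF assms(1)]
  have "((table T, q, u0), s) \<in> A0 k \<times> {s. length s \<le> L}"
    using table_in[OF assms(1)] assms sb(2) by (auto simp: A0_def)
  moreover have "take (2 * L) (u0 @ run_out T q s) = (\<lambda>((tb, q, u0), s). take (2 * L) (u0 @ trun tb q s)) ((table T, q, u0), s)"
    using run_out_trun[OF sb(1) assms(2)] by simp
  ultimately show ?thesis unfolding Gk_def by blast
qed

lemma card_len_le: "card {w::bool list. length w \<le> L} < 2 ^ Suc L"
proof -
  have "card {w::bool list. length w \<le> L} = (\<Sum>i\<le>L. 2 ^ i)"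
    using card_lists_length_le[of "UNIV::bool set" L] by simp
  also have "\<dots> < 2 ^ Suc L" by (induction L) auto
  finally show ?thesis .
qed

lemma exists_z: "\<exists>L z. k + 8 \<le> L \<and> length z = 2 * L \<and> z \<notin> Gk k L"
proof -
  define c where "c = card (A0 k)"
  define L where "L = k + 8 + 2 * c + 1"
  have fin: "finite (Gk k L)" unfolding Gk_def using finite_A0 finite_len_le by simp
  have "card (Gk k L) \<le> card (A0 k \<times> {s::bool list. length s \<le> L})"
    unfolding Gk_def using finite_A0 finite_len_le by (intro card_image_le) simp
  also have "\<dots> = c * card {s::bool list. length s \<le> L}" by (simp add: c_def card_cartesian_product)
  also have "\<dots> \<le> c * 2 ^ Suc L" using card_len_le[of L] by simp
  also have "\<dots> = (2 * c) * 2 ^ L" by simp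
  also have "\<dots> < L * 2 ^ L" unfolding L_def by (intro mult_strict_right_mono) auto
  also have "\<dots> < 2 ^ L * 2 ^ L" by (intro mult_strict_right_mono) (auto simp: less_exp)
  also have "\<dots> = 2 ^ (2 * L)" by (simp add: power_add[symmetric] mult_2)
  finally have lt: "card (Gk k L) < 2 ^ (2 * L)" .
  have cz: "card {z::bool list. length z = 2 * L} = 2 ^ (2 * L)"
    using card_lists_length_eq[of "UNIV::bool set" "2 * L"] by simp
  have "\<not> {z::bool list. length z = 2 * L} \<subseteq> Gk k L"
  proof
    assume "{z::bool list. length z = 2 * L} \<subseteq> Gk k L"
    from card_mono[OF fin this] show False using lt cz by simp
  qed
  then obtain z where "length z = 2 * L" "z \<notin> Gk k L" by blast
  moreover have "k + 8 \<le> L" by (simp add: L_def)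
  ultimately show ?thesis by blast
qed

definition Lk :: "nat \<Rightarrow> nat" where
  "Lk k = (SOME L. \<exists>z. k + 8 \<le> L \<and> length z = 2 * L \<and> z \<notin> Gk k L)"

definition zz :: "nat \<Rightarrow> bool list" where
  "zz k = (SOME z. k + 8 \<le> Lk k \<and> length z = 2 * Lk k \<and> z \<notin> Gk k (Lk k))"

lemma zz_props: "k + 8 \<le> Lk k" "length (zz k) = 2 * Lk k" "zz k \<notin> Gk k (Lk k)"
proof -
  have "\<exists>z. k + 8 \<le> Lk k \<and> length z = 2 * Lk k \<and> z \<notin> Gk k (Lk k)"
    unfolding Lk_def using exists_z[of k] by (rule someI_ex)
  then have "k + 8 \<le> Lk k \<and> length (zz k) = 2 * Lk k \<and> zz k \<notin> Gk k (Lk k)"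
    unfolding zz_def by (rule someI_ex)
  then show "k + 8 \<le> Lk k" "length (zz k) = 2 * Lk k" "zz k \<notin> Gk k (Lk k)" by auto
qed

lemma Dk_lower:
  assumes "Dk k (P @ concat (replicate r (zz k))) = enat a"
  shows "r * (Lk k + 1) \<le> a"
proof -
  let ?S = "{enat (length y) | y T. T \<in> FST_le k \<and> fst_out T y = P @ concat (replicate r (zz k))}"
  have "\<forall>e \<in> ?S. enat (r * (Lk k + 1)) \<le> e"
  proof
    fix e assume "e \<in> ?S"
    then obtain y T where yT: "e = enat (length y)" "T \<in> FST_le k"
      "fst_out T y = P @ concat (replicate r (zz k))" by blast
    note sb = size_bounds[OF yT(2)]
    have q0: "fst_q0 T < fst_m T" using sb(1) by (simp add: fst_wf_def)
    have l2: "length P \<le> length ([] @ run_out T (fst_q0 T) y)" using yT(3) by (simp add: fst_out_def)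
    from skip[OF sb(1) sb(3) q0 _ l2] obtain t u w where
      h: "length w = length P" "length u \<le> k"
       "[] @ run_out T (fst_q0 T) y = w @ u @ run_out T (run_state T (fst_q0 T) (take t y)) (drop t y)"
      by auto
    have "w @ (u @ run_out T (run_state T (fst_q0 T) (take t y)) (drop t y)) = P @ (concat (replicate r (zz k)))"
      using h(3) yT(3) by (simp add: fst_out_def)
    then have rest: "u @ run_out T (run_state T (fst_q0 T) (take t y)) (drop t y) = concat (replicate r (zz k)) @ []"
      using h(1) by (auto simp: append_eq_append_conv)
    have pB: "k < length (zz k)" using zz_props(1,2)[of k] by simp
    have notG: "\<forall>q<fst_m T. \<forall>u0 s. length u0 \<le> k \<longrightarrow> length s \<le> Lk k \<longrightarrow>
         take (length (zz k)) (u0 @ run_out T q s) \<noteq> zz k"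
      using in_Gk[OF yT(2)] zz_props(2,3)[of k] by metis
    have "r * (Lk k + 1) \<le> length (drop t y)"
      using mainlb[OF sb(1) sb(3) pB notG run_state_lt[OF sb(1) q0] h(2) rest] .
    then show "enat (r * (Lk k + 1)) \<le> e" using yT(1) by simp
  qed
  then have "enat (r * (Lk k + 1)) \<le> Dk k (P @ concat (replicate r (zz k)))"
    unfolding Dk_def by (intro Inf_greatest) blast
  then show ?thesis using assms by simp
qed

definition Hz :: "bool list \<Rightarrow> fst" where
  "Hz z = \<lparr>fst_m = 3, fst_q0 = 0,
     fst_delta = (\<lambda>q b. if q = 0 then (if b then 2 else 1) else if q = 2 then 2 else 0),
     fst_nu = (\<lambda>q b. if q = 1 then [b] else if q = 2 then z else [])\<rparr>"

lemma Hz_wf: "fst_wf (Hz z)"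
  by (simp add: fst_wf_def Hz_def)

lemma Hz_rep: "run_out (Hz z) 2 (replicate r False) = concat (replicate r z)"
  by (induction r) (auto simp: Hz_def)

lemma Hz_pre: "run_out (Hz z) 0 (concat (map (\<lambda>b. [False, b]) P) @ v) = P @ run_out (Hz z) 0 v"
  by (induction P) (auto simp: Hz_def)

lemma Dk_upper: "Dk (fst_size (Hz z)) (P @ concat (replicate r z)) \<le> enat (2 * length P + 1 + r)"
proof -
  define y where "y = concat (map (\<lambda>b. [False, b]) P) @ True # replicate r False"
  have "fst_out (Hz z) y = P @ concat (replicate r z)"
  proof -
    have q: "fst_q0 (Hz z) = 0" by (simp add: Hz_def)
    have "run_out (Hz z) 0 (True # replicate r False) = concat (replicate r z)"
      using Hz_rep[of z r] by (simp add: Hz_def)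
    then show ?thesis unfolding y_def fst_out_def q Hz_pre by simp
  qed
  moreover have "Hz z \<in> FST_le (fst_size (Hz z))" by (simp add: FST_le_def Hz_wf)
  moreover have "length (concat (map (\<lambda>b. [False, b]) P)) = 2 * length P" by (induction P) auto
  then have "length y = 2 * length P + 1 + r" by (simp add: y_def)
  ultimately show ?thesis unfolding Dk_def by (intro Inf_lower) (metis (mono_tags, lifting) mem_Collect_eq)
qed

definition Cp :: "nat \<Rightarrow> fst" where
  "Cp p = \<lparr>fst_m = p, fst_q0 = 0,
     fst_delta = (\<lambda>q b. if b then 0 else if Suc q < p then Suc q else 0),
     fst_nu = (\<lambda>q b. if b then True # replicate q False @ [True] else if Suc q < p then [] else [False])\<rparr>"

function dec :: "nat \<Rightarrow> bool list \<Rightarrow> nat \<Rightarrow> bool list" where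
  "dec p [] f = replicate f False"
| "dec p (False # w) f = replicate p False @ dec p w f"
| "dec p (True # w) f = replicate (length (takeWhile Not w)) False @
     True # dec p (drop (Suc (length (takeWhile Not w))) w) f"
  by pat_completeness auto
termination by (relation "measure (\<lambda>(p, w, f). length w)") auto

lemma tw_rep: "takeWhile Not (replicate q False @ True # w) = replicate q False"
  by (induction q) auto

lemma dec_run: "q < p \<Longrightarrow> dec p (run_out (Cp p) q x) (run_state (Cp p) q x) = replicate q False @ x"
proof (induction x arbitrary: q)
  case Nil then show ?case by simp
next
  case (Cons b x)
  show ?case
  proof (cases b)
    case True
    have "0 < p" using Cons.prems by simp
    then have "dec p (run_out (Cp p) 0 x) (run_state (Cp p) 0 x) = x" using Cons.IH[of 0] by simp
    then show ?thesis using True by (simp add: Cp_def tw_rep)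
  next
    case False
    show ?thesis
    proof (cases "Suc q < p")
      case True
      then show ?thesis using Cons.IH[of "Suc q"] \<open>\<not> b\<close> by (simp add: Cp_def replicate_app_Cons_same)
    next
      case F2: False
      then have pq: "p = Suc q" using Cons.prems by simp
      have "0 < p" using Cons.prems by simp
      then have "dec p (run_out (Cp p) 0 x) (run_state (Cp p) 0 x) = x" using Cons.IH[of 0] by simp
      then show ?thesis using F2 \<open>\<not> b\<close> pq by (simp add: Cp_def replicate_app_Cons_same)
    qed
  qed
qed

lemma Cp_ILFST: "1 \<le> p \<Longrightarrow> ILFST (Cp p)"
  unfolding ILFST_def
proof
  assume p: "1 \<le> p"
  show "fst_wf (Cp p)" using p by (simp add: fst_wf_def Cp_def)
  show "inj (\<lambda>x. (fst_out (Cp p) x, fst_state (Cp p) x))"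
  proof (rule injI)
    fix x y assume "(fst_out (Cp p) x, fst_state (Cp p) x) = (fst_out (Cp p) y, fst_state (Cp p) y)"
    then have "dec p (run_out (Cp p) 0 x) (run_state (Cp p) 0 x) = dec p (run_out (Cp p) 0 y) (run_state (Cp p) 0 y)"
      by (simp add: fst_out_def fst_state_def Cp_def)
    then show "x = y" using dec_run[of 0 p x] dec_run[of 0 p y] p by simp
  qed
qed

lemma Cp_zero: "q < p \<Longrightarrow> length (run_out (Cp p) q (replicate N False)) = (q + N) div p"
proof (induction N arbitrary: q)
  case 0 then show ?case by simp
next
  case (Suc N)
  show ?case
  proof (cases "Suc q < p")
    case True
    then show ?thesis using Suc.IH[of "Suc q"] by (simp add: Cp_def)
  next
    case False
    then have pq: "p = Suc q" using Suc.prems by simp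
    have "0 < p" using Suc.prems by simp
    then have "length (run_out (Cp p) 0 (replicate N False)) = N div p" using Suc.IH[of 0] by simp
    moreover have "(q + Suc N) div p = Suc (N div p)" using pq
      by (metis add_Suc add.commute div_add_self2 old.nat.distinct(1) plus_1_eq_Suc)
    ultimately show ?thesis using False pq by (simp add: Cp_def)
  qed
qed

lemma Cp_len: "q < p \<Longrightarrow> length (run_out (Cp p) q x) \<le> (p + 1) * length x"
proof (induction x arbitrary: q)
  case Nil then show ?case by simp
next
  case (Cons b x)
  have d: "fst_delta (Cp p) q b < p" using Cons.prems by (auto simp: Cp_def)
  have "length (fst_nu (Cp p) q b) \<le> p + 1" using Cons.prems by (auto simp: Cp_def)
  then show ?case using Cons.IH[OF d] by simp
qed

definition kap :: "nat \<Rightarrow> nat" where "kap i = fst (prod_decode (i div 2))"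

definition zonef :: "nat \<Rightarrow> nat \<Rightarrow> bool list" where
  "zonef i P = (if even i then replicate ((i + 1) * (P + 1)) False
     else concat (replicate ((i + 1) * (P + 1)) (zz (kap i))))"

fun pl :: "nat \<Rightarrow> nat" where
  "pl 0 = 0"
| "pl (Suc i) = pl i + length (zonef i (pl i))"

definition Sq :: "nat \<Rightarrow> bool" where
  "Sq n = (let i = LEAST i. n < pl (Suc i) in zonef i (pl i) ! (n - pl i))"

lemma len_concat_rep: "length (concat (replicate r z)) = r * length z"
  by (induction r) auto

lemma zonef_len_pos: "1 \<le> length (zonef i P)"
proof -
  have "1 \<le> length (zz (kap i))" using zz_props(1,2)[of "kap i"] by simp
  then show ?thesis by (simp add: zonef_def len_concat_rep)
qed

lemma pl_lt: "pl i < pl (Suc i)"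
  using zonef_len_pos[of i "pl i"] by (simp del: One_nat_def) (metis le_zero_eq length_0_conv one_neq_zero)

lemma pl_mono: "i \<le> j \<Longrightarrow> pl i \<le> pl j"
  by (induction j) (auto simp: le_Suc_eq intro: le_trans[OF _ less_imp_le[OF pl_lt]])

lemma pl_ge: "i \<le> pl i"
  by (induction i) (use pl_lt in \<open>auto simp: Suc_le_eq intro: le_less_trans\<close>)

lemma Sq_zone: assumes "pl i \<le> n" "n < pl (Suc i)" shows "Sq n = zonef i (pl i) ! (n - pl i)"
proof -
  have "(LEAST j. n < pl (Suc j)) = i"
  proof (rule Least_equality)
    show "n < pl (Suc i)" by fact
    fix j assume "n < pl (Suc j)"
    show "i \<le> j"
    proof (rule ccontr)
      assume "\<not> i \<le> j"
      then have "pl (Suc j) \<le> pl i" by (intro pl_mono) simp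
      then show False using assms \<open>n < pl (Suc j)\<close> by simp
    qed
  qed
  then show ?thesis by (simp add: Sq_def)
qed

lemma prefix_step: "prefix_of Sq (pl (Suc i)) = prefix_of Sq (pl i) @ zonef i (pl i)"
proof -
  have "[0..<pl (Suc i)] = [0..<pl i] @ [pl i..<pl (Suc i)]"
    using pl_lt[of i] by (simp add: upt_add_eq_append[symmetric] less_imp_le)
  moreover have "map Sq [pl i..<pl (Suc i)] = zonef i (pl i)"
  proof (rule nth_equalityI)
    show "length (map Sq [pl i..<pl (Suc i)]) = length (zonef i (pl i))" by simp
    fix j assume "j < length (map Sq [pl i..<pl (Suc i)])"
    then have j: "j < length (zonef i (pl i))" by simp
    have "Sq (pl i + j) = zonef i (pl i) ! j" using Sq_zone[of i "pl i + j"] j by simp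
    then show "map Sq [pl i..<pl (Suc i)] ! j = zonef i (pl i) ! j" using j by simp
  qed
  ultimately show ?thesis by (simp add: prefix_of_def)
qed

lemma len_prefix: "length (prefix_of S n) = n"
  by (simp add: prefix_of_def)

lemma Sq_FS_deep: "FS_deep Sq"
  unfolding FS_deep_def
proof (intro exI[of _ "1/16"] conjI allI)
  show "(0::real) < 1/16" by simp
  fix k
  show "\<exists>k'. \<exists>\<^sub>\<infinity>n. \<exists>b. Dk k' (prefix_of Sq n) = enat b \<and>
      (\<forall>a. Dk k (prefix_of Sq n) = enat a \<longrightarrow> 1/16 * real n \<le> real a - real b)"
  proof (intro exI[of _ "fst_size (Hz (zz k))"], unfold INFM_nat, intro allI)
    fix m
    define i where "i = 2 * prod_encode (k, m) + 1"
    have oi: "odd i" and ki: "kap i = k" by (auto simp: i_def kap_def)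
    have im: "m < i" using le_prod_encode_2[of m k] by (simp add: i_def)
    define P where "P = pl i"
    define r where "r = (i + 1) * (P + 1)"
    define L where "L = Lk k"
    have L8: "8 \<le> L" using zz_props(1)[of k] by (simp add: L_def)
    define n where "n = pl (Suc i)"
    have x: "prefix_of Sq n = prefix_of Sq P @ concat (replicate r (zz k))"
      unfolding n_def prefix_step P_def r_def using oi ki by (simp add: zonef_def)
    have nv: "n = P + r * (2 * L)"
      using arg_cong[OF x, of length] by (simp add: len_prefix len_concat_rep zz_props(2) L_def)
    have "m < n" using im pl_ge[of "Suc i"] by (simp add: n_def)
    moreover have "\<exists>b. Dk (fst_size (Hz (zz k))) (prefix_of Sq n) = enat b \<and>
      (\<forall>a. Dk k (prefix_of Sq n) = enat a \<longrightarrow> 1/16 * real n \<le> real a - real b)"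
    proof -
      have up: "Dk (fst_size (Hz (zz k))) (prefix_of Sq n) \<le> enat (2 * P + 1 + r)"
        unfolding x using Dk_upper[of "zz k" "prefix_of Sq P" r] by (simp add: len_prefix)
      then obtain b where b: "Dk (fst_size (Hz (zz k))) (prefix_of Sq n) = enat b" using enat_ile by blast
      have bb: "b \<le> 2 * P + 1 + r" using up b by simp
      have r2: "2 * (P + 1) \<le> r" using oi by (cases i) (auto simp: r_def)
      have rL: "16 * (P + 1) \<le> r * L"
      proof -
        have "2 * (P + 1) * 8 \<le> r * L" using r2 L8 by (intro mult_mono) auto
        then show ?thesis by simp
      qed
      have "\<forall>a. Dk k (prefix_of Sq n) = enat a \<longrightarrow> 1/16 * real n \<le> real a - real b"
      proof (intro allI impI)
        fix a assume "Dk k (prefix_of Sq n) = enat a"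
        then have "r * (L + 1) \<le> a" using Dk_lower unfolding x L_def by blast
        then have "real (r * (L + 1)) \<le> real a" by (simp only: of_nat_le_iff)
        then have ra: "real r * real L + real r \<le> real a" by (simp add: algebra_simps)
        have rb: "real b \<le> 2 * real P + 1 + real r" using bb by linarith
        have "real (16 * (P + 1)) \<le> real (r * L)" using rL by (simp only: of_nat_le_iff)
        then have rl: "16 * (real P + 1) \<le> real r * real L" by simp
        have rn: "real n = real P + 2 * (real r * real L)" using nv by simp
        have gen: "\<And>(X::real) (A::real) (B::real) (Pr::real) (Nn::real) (R::real). X + R \<le> A \<Longrightarrow> B \<le> 2 * Pr + 1 + R \<Longrightarrow> 16 * (Pr + 1) \<le> X
           \<Longrightarrow> 0 \<le> Pr \<Longrightarrow> Nn = Pr + 2 * X \<Longrightarrow> 1/16 * Nn \<le> A - B" by simp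
        show "1/16 * real n \<le> real a - real b" using gen[OF ra rb rl _ rn] by simp
      qed
      then show ?thesis using b by blast
    qed
    ultimately show "\<exists>n>m. \<exists>b. Dk (fst_size (Hz (zz k))) (prefix_of Sq n) = enat b \<and>
      (\<forall>a. Dk k (prefix_of Sq n) = enat a \<longrightarrow> 1/16 * real n \<le> real a - real b)" by blast
  qed
qed

lemma Sq_not_LZ: "\<not> LZ_deep Sq"
  unfolding LZ_deep_def
proof
  assume "\<exists>\<alpha>::real. \<alpha> > 0 \<and> (\<forall>C. ILFST C \<longrightarrow>
     (\<forall>\<^sub>F n in sequentially.
        real (length (fst_out C (prefix_of Sq n))) - real (length (LZ (prefix_of Sq n))) \<ge> \<alpha> * real n))"
  then obtain \<alpha> :: real where a: "\<alpha> > 0" and h: "\<forall>C. ILFST C \<longrightarrow>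
     (\<forall>\<^sub>F n in sequentially.
        real (length (fst_out C (prefix_of Sq n))) - real (length (LZ (prefix_of Sq n))) \<ge> \<alpha> * real n)"
    by blast
  define p where "p = nat \<lceil>2 / \<alpha>\<rceil> + 1"
  have p1: "1 \<le> p" by (simp add: p_def)
  have pa: "2 / \<alpha> \<le> real p" unfolding p_def by linarith
  have ip: "1 / real p \<le> \<alpha> / 2"
  proof -
    have "2 \<le> real p * \<alpha>" using pa a by (simp add: pos_divide_le_eq)
    then show ?thesis using p1 a by (simp add: divide_le_eq field_simps)
  qed
  have "\<forall>\<^sub>F n in sequentially.
        real (length (fst_out (Cp p) (prefix_of Sq n))) - real (length (LZ (prefix_of Sq n))) \<ge> \<alpha> * real n"
    using h Cp_ILFST[OF p1] by blast
  then obtain N where hN: "\<And>n. n \<ge> N \<Longrightarrow>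
        real (length (fst_out (Cp p) (prefix_of Sq n))) - real (length (LZ (prefix_of Sq n))) \<ge> \<alpha> * real n"
    unfolding eventually_sequentially by blast
  define i where "i = 2 * (N + nat \<lceil>2 * (real p + 1) / \<alpha>\<rceil>)"
  have ei: "even i" by (simp add: i_def)
  have iN: "N \<le> i" by (simp add: i_def)
  have ri: "2 * (real p + 1) / \<alpha> \<le> real i"
  proof -
    have "2 * (real p + 1) / \<alpha> \<le> real (nat \<lceil>2 * (real p + 1) / \<alpha>\<rceil>)" by (rule real_nat_ceiling_ge)
    also have "\<dots> \<le> real i" unfolding i_def by simp
    finally show ?thesis .
  qed
  have ai: "2 * (real p + 1) \<le> \<alpha> * real i" using ri a by (simp add: pos_divide_le_eq mult.commute)
  define P where "P = pl i"
  define Nz where "Nz = (i + 1) * (P + 1)"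
  define n where "n = pl (Suc i)"
  have x: "prefix_of Sq n = prefix_of Sq P @ replicate Nz False"
    unfolding n_def prefix_step P_def Nz_def using ei by (simp add: zonef_def)
  have nv: "n = P + Nz" using arg_cong[OF x, of length] by (simp add: len_prefix)
  have nN: "N \<le> n" using iN pl_ge[of "Suc i"] by (simp add: n_def)
  define q where "q = run_state (Cp p) 0 (prefix_of Sq P)"
  have wf: "fst_wf (Cp p)" using Cp_ILFST[OF p1] by (simp add: ILFST_def)
  have qp: "q < p" unfolding q_def using run_state_lt[OF wf, of 0] p1 by (simp add: Cp_def)
  have lc: "length (fst_out (Cp p) (prefix_of Sq n)) =
      length (run_out (Cp p) 0 (prefix_of Sq P)) + (q + Nz) div p"
    unfolding x fst_out_def using Cp_zero[OF qp] by (simp add: Cp_def run_out_append q_def)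
  have l1: "length (run_out (Cp p) 0 (prefix_of Sq P)) \<le> (p + 1) * P"
    using Cp_len[of 0 p "prefix_of Sq P"] p1 unfolding len_prefix by simp
  have r1: "real (length (run_out (Cp p) 0 (prefix_of Sq P))) \<le> (real p + 1) * real P"
    using l1 by (metis of_nat_1 of_nat_add of_nat_le_iff of_nat_mult)
  have r2: "real ((q + Nz) div p) \<le> (real q + real Nz) / real p"
    using of_nat_div_le_of_nat[of "q + Nz" p] by simp
  have r3: "(real q + real Nz) / real p = real q / real p + real Nz * (1 / real p)" by (simp add: add_divide_distrib)
  have r4: "real q / real p < 1" using qp by simp
  have r5: "real Nz * (1 / real p) \<le> real Nz * (\<alpha> / 2)" using ip by (intro mult_left_mono) auto
  have r6: "(real p + 1) * (real P + 1) \<le> \<alpha> * real i * (real P + 1) / 2"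
    using mult_right_mono[OF ai, of "real P + 1"] by simp
  have r7: "real Nz = (real i + 1) * (real P + 1)" by (simp add: Nz_def algebra_simps)
  have r8: "\<alpha> * real i * (real P + 1) \<le> \<alpha> * real Nz"
    unfolding r7 using a by (simp add: algebra_simps)
  have "real (length (fst_out (Cp p) (prefix_of Sq n))) < \<alpha> * real n"
  proof -
    have "real (length (fst_out (Cp p) (prefix_of Sq n))) \<le> (real p + 1) * real P + (real q / real p + real Nz * (\<alpha> / 2))"
      using lc r1 r2 r3 r5 by simp
    also have "\<dots> < (real p + 1) * (real P + 1) + real Nz * (\<alpha> / 2)" using r4 by (simp add: algebra_simps)
    also have "\<dots> \<le> \<alpha> * real Nz"
    proof -
      have r9: "real Nz * (\<alpha> / 2) = (\<alpha> * real Nz) / 2" by simp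
      show ?thesis unfolding r9 using r6 r8 by linarith
    qed
    also have "\<dots> \<le> \<alpha> * real n" using a nv by simp
    finally show ?thesis .
  qed
  moreover have "\<alpha> * real n \<le> real (length (fst_out (Cp p) (prefix_of Sq n)))"
    using hN[OF nN] by simp
  ultimately show False by simp
qed

theorem mainTheorem8:
  shows "\<exists>S :: nat \<Rightarrow> bool. FS_deep S \<and> \<not> LZ_deep S"
  using Sq_FS_deep Sq_not_LZ by blast

end
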